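(* Let $r\ge 3$, $t\ge 2$, and let $G$ be a connected simple $(r+1)$-regular graph with $N$ vertices and girth at least $t+1$. Let $\mathcal{C}$ be the binary code whose parity-check matrix is the vertex–edge incidence matrix of $G$ over $\mathbb{F}_2$ (an $(n,k,r,t)_{\mathrm{seq}}$ code with $n=N(r+1)/2$). Then $\mathcal{C}$ attains equality in the rate bound, i.e. $\frac{k}{n}=\frac{r^{s+1}}{r^{s+1}+2\sum_{i=0}^{s}r^i}$ for $t$ even and $\frac{k}{n}=\frac{r^{s+1}}{r^{s+1}+2\sum_{i=1}^{s}r^i+1}$ for $t$ odd, where $s=\lfloor(t-1)/2\rfloor$, if and only if $G$ is a Moore graph.
   Context: For integers $r\ge1$, $t\ge2$ define $N_{r,t}=1+\sum_{i=0}^{s}(r+1)r^i$ if $t=2s+2$ is even and $N_{r,t}=2\sum_{i=0}^{s}r^i$ if $t=2s+1$ is odd. A Moore graph (for $r,t$) is an $(r+1)$-regular graph of girth at least $t+1$ with exactly $N_{r,t}$ vertices. An $(n,k,r,t)_{\mathrm{seq}}$ code is an $[n,k]$ linear code $\mathcal{C}\subseteq\mathbb{F}_q^n$ such that for every $E\subseteq[n]$ with $1\le|E|=u\le t$ there is an ordering $\ell_1,\dots,\ell_u$ of $E$ and sets $R_j\subseteq[n]$, $|R_j|\le r$, $R_j\cap\{\ell_j,\dots,\ell_u\}=\emptyset$, with coefficients $a_{j,i}$ such that $c_{\ell_j}=\sum_{i\in R_j}a_{j,i}c_i$ for all $c\in\mathcal{C}$. *)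

theory Defs
  imports Complex_Main "HOL-Library.Z2" "HOL-Library.Function_Algebras"
begin

text \<open>Simple graphs: a finite vertex set V and a symmetric, irreflexive adjacency
relation E (only its restriction to V matters).\<close>

definition simple_graph :: "'a set \<Rightarrow> ('a \<Rightarrow> 'a \<Rightarrow> bool) \<Rightarrow> bool" where
  "simple_graph V E \<longleftrightarrow> finite V \<and> (\<forall>u\<in>V. \<forall>v\<in>V. E u v \<longleftrightarrow> E v u) \<and> (\<forall>v\<in>V. \<not> E v v)"

definition graph_edges :: "'a set \<Rightarrow> ('a \<Rightarrow> 'a \<Rightarrow> bool) \<Rightarrow> 'a set set" where
  "graph_edges V E = {{u, v} | u v. u \<in> V \<and> v \<in> V \<and> E u v}"

definition regular :: "'a set \<Rightarrow> ('a \<Rightarrow> 'a \<Rightarrow> bool) \<Rightarrow> nat \<Rightarrow> bool" where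
  "regular V E d \<longleftrightarrow> (\<forall>v\<in>V. card {w\<in>V. E v w} = d)"

definition connected_graph :: "'a set \<Rightarrow> ('a \<Rightarrow> 'a \<Rightarrow> bool) \<Rightarrow> bool" where
  "connected_graph V E \<longleftrightarrow> (\<forall>u\<in>V. \<forall>v\<in>V. (\<lambda>x y. x \<in> V \<and> y \<in> V \<and> E x y)\<^sup>*\<^sup>* u v)"

definition is_cycle :: "'a set \<Rightarrow> ('a \<Rightarrow> 'a \<Rightarrow> bool) \<Rightarrow> 'a list \<Rightarrow> bool" where
  "is_cycle V E cs \<longleftrightarrow> length cs \<ge> 3 \<and> distinct cs \<and> set cs \<subseteq> V \<and>
     (\<forall>i < length cs. E (cs ! i) (cs ! ((i + 1) mod length cs)))"

definition girth_at_least :: "'a set \<Rightarrow> ('a \<Rightarrow> 'a \<Rightarrow> bool) \<Rightarrow> nat \<Rightarrow> bool" where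
  "girth_at_least V E g \<longleftrightarrow> (\<forall>cs. is_cycle V E cs \<longrightarrow> length cs \<ge> g)"

definition moore_bound :: "nat \<Rightarrow> nat \<Rightarrow> nat" where
  "moore_bound r t =
     (if even t then 1 + (\<Sum>i=0..(t - 2) div 2. (r + 1) * r ^ i)
      else 2 * (\<Sum>i=0..(t - 1) div 2. r ^ i))"

definition moore_graph :: "'a set \<Rightarrow> ('a \<Rightarrow> 'a \<Rightarrow> bool) \<Rightarrow> nat \<Rightarrow> nat \<Rightarrow> bool" where
  "moore_graph V E r t \<longleftrightarrow> regular V E (r + 1) \<and> girth_at_least V E (t + 1) \<and> card V = moore_bound r t"

text \<open>Binary code with parity-check matrix the vertex-edge incidence matrix of the graph:
words are vectors indexed by the edges (functions vanishing off the edge set), and for every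
vertex v the sum over the edges incident to v is 0 in F_2.\<close>
definition incidence_code :: "'a set \<Rightarrow> ('a \<Rightarrow> 'a \<Rightarrow> bool) \<Rightarrow> ('a set \<Rightarrow> bit) set" where
  "incidence_code V E = {x. (\<forall>e. e \<notin> graph_edges V E \<longrightarrow> x e = 0) \<and>
      (\<forall>v\<in>V. (\<Sum>e\<in>{e\<in>graph_edges V E. v \<in> e}. x e) = 0)}"

definition dim2 :: "('a set \<Rightarrow> bit) set \<Rightarrow> nat" where
  "dim2 S = vector_space.dim (\<lambda>(c::bit) x. (\<lambda>e. c * x e)) S"

end

theory Submission imports Defs begin
interpretation bv: vector_space "\<lambda>(c::bit) (x::'b \<Rightarrow> bit). (\<lambda>e. c * x e)"
  by unfold_locales (auto simp: fun_eq_iff algebra_simps)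

lemma dimsplit:
  fixes W C P :: "('b \<Rightarrow> bit) set"
  assumes F: "finite F" "W \<subseteq> bv.span F"
    and C: "bv.subspace C" "C \<subseteq> W"
    and P: "finite P" "bv.independent P" "P \<subseteq> W"
    and CP: "\<And>y. y \<in> C \<Longrightarrow> y \<in> bv.span P \<Longrightarrow> y = 0"
    and dec: "\<And>x. x \<in> W \<Longrightarrow> \<exists>c\<in>C. \<exists>y\<in>bv.span P. x = c + y"
    and Wsub: "bv.subspace W"
  shows "bv.dim C + card P = bv.dim W"
proof -
  obtain K where K: "K \<subseteq> C" "bv.independent K" "C \<subseteq> bv.span K" "card K = bv.dim C"
    using bv.basis_exists by blast
  have Kfin: "finite K" using bv.independent_span_bound[OF F(1) K(2)] K(1) C(2) F(2) by blast
  have spK: "bv.span K \<subseteq> C" using bv.span_minimal[OF K(1) C(1)] .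
  have disj: "K \<inter> P = {}"
  proof (rule ccontr)
    assume "K \<inter> P \<noteq> {}"
    then obtain v where v: "v \<in> K" "v \<in> P" by blast
    then have "v = 0" using CP[of v] K(1) bv.span_base[of v P] by blast
    then show False using v K(2) bv.dependent_zero by blast
  qed
  have ind: "bv.independent (K \<union> P)"
  proof
    assume "bv.dependent (K \<union> P)"
    then obtain u where u: "\<exists>v\<in>K \<union> P. u v \<noteq> 0" "(\<Sum>v\<in>K \<union> P. (\<lambda>e. u v * v e)) = 0"
      using iffD1[OF bv.dependent_finite[of "K \<union> P"]] Kfin P(1) by (meson finite_UnI)
    define a where "a = (\<Sum>v\<in>K. (\<lambda>e. u v * v e))"
    define b where "b = (\<Sum>v\<in>P. (\<lambda>e. u v * v e))"
    have ab: "a + b = 0" using u(2) sum.union_disjoint[OF Kfin P(1) disj] a_def b_def by metis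
    have aK: "a \<in> bv.span K" unfolding a_def
      by (intro bv.span_sum bv.span_scale bv.span_base) 
    have bP: "b \<in> bv.span P" unfolding b_def
      by (intro bv.span_sum bv.span_scale bv.span_base) 
    have "a = - b" using ab by (simp add: eq_neg_iff_add_eq_0)
    then have "a \<in> bv.span P" using bv.span_neg[OF bP] by simp
    then have a0: "a = 0" using CP aK spK by blast
    then have b0: "b = 0" using ab by simp
    have "\<forall>v\<in>K. u v = 0"
    proof (rule ccontr)
      assume "\<not> (\<forall>v\<in>K. u v = 0)"
      then have h: "\<exists>v\<in>K. u v \<noteq> 0" by simp
      have "bv.dependent K" unfolding bv.dependent_finite[OF Kfin]
        by (rule exI[of _ u], rule conjI[OF h]) (use a0 in \<open>simp add: a_def\<close>)
      then show False using K(2) by simp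
    qed
    moreover have "\<forall>v\<in>P. u v = 0"
    proof (rule ccontr)
      assume "\<not> (\<forall>v\<in>P. u v = 0)"
      then have h: "\<exists>v\<in>P. u v \<noteq> 0" by simp
      have "bv.dependent P" unfolding bv.dependent_finite[OF P(1)]
        by (rule exI[of _ u], rule conjI[OF h]) (use b0 in \<open>simp add: b_def\<close>)
      then show False using P(2) by simp
    qed
    ultimately show False using u(1) by blast
  qed
  have "card (K \<union> P) = bv.dim W"
  proof (rule bv.basis_card_eq_dim)
    show "K \<union> P \<subseteq> W" using K(1) C(2) P(3) by blast
    show "bv.independent (K \<union> P)" by (rule ind)
    show "W \<subseteq> bv.span (K \<union> P)"
    proof
      fix x assume "x \<in> W"
      then obtain c y where cy: "c \<in> C" "y \<in> bv.span P" "x = c + y" using dec by blast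
      have "c \<in> bv.span (K \<union> P)" using cy(1) K(3) bv.span_mono[of K "K \<union> P"] by blast
      moreover have "y \<in> bv.span (K \<union> P)" using cy(2) bv.span_mono[of P "K \<union> P"] by blast
      ultimately show "x \<in> bv.span (K \<union> P)" using cy(3) bv.span_add by simp
    qed
  qed
  then show ?thesis using card_Un_disjoint[OF Kfin P(1) disj] K(4) by simp
qed

declare add_bit_eq_xor[simp del] mult_bit_eq_and[simp del]

lemma sum_fun_apply: "(\<Sum>i\<in>A. f i) x = (\<Sum>i\<in>A. f i x)"
  by (induct A rule: infinite_finite_induct) auto

lemma bit_cases: "(b::bit) = 0 \<or> b = 1" by (metis bit_not_zero_iff)
lemma bit_add_self[simp]: "(b::bit) + b = 0" using bit_cases[of b] by auto

definition phi :: "'a set set \<Rightarrow> ('a set \<Rightarrow> bit) \<Rightarrow> 'a \<Rightarrow> bit" where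
  "phi Ed x v = (\<Sum>e\<in>{e\<in>Ed. v\<in>e}. x e)"

definition Wsp :: "'a set set \<Rightarrow> ('a set \<Rightarrow> bit) set" where
  "Wsp Ed = {x. \<forall>e. e\<notin>Ed \<longrightarrow> x e = 0}"

definition dl :: "'a \<Rightarrow> 'a \<Rightarrow> bit" where "dl a w = (if w = a then 1 else 0)"

lemma code_eq: "incidence_code V E = {x\<in>Wsp (graph_edges V E). \<forall>v\<in>V. phi (graph_edges V E) x v = 0}"
  by (auto simp: incidence_code_def Wsp_def phi_def)

lemma edges_sub: "graph_edges V E \<subseteq> Pow V" by (auto simp: graph_edges_def)

lemma finite_edges: "finite V \<Longrightarrow> finite (graph_edges V E)"
  using edges_sub by (metis finite_Pow_iff finite_subset)

lemma edge_form: assumes "simple_graph V E" "e \<in> graph_edges V E"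
  shows "\<exists>u w. e = {u,w} \<and> u \<noteq> w \<and> u \<in> V \<and> w \<in> V \<and> E u w"
  using assms unfolding graph_edges_def simple_graph_def by blast

lemma edge_card: assumes "simple_graph V E" "e \<in> graph_edges V E"
  shows "card e = 2" "e \<subseteq> V"
  using edge_form[OF assms] by auto

lemma phi_add: "phi Ed (x + y) v = phi Ed x v + phi Ed y v"
  by (simp add: phi_def sum.distrib)

lemma phi_lin: "finite I \<Longrightarrow> phi Ed (\<Sum>i\<in>I. (\<lambda>e. c i * f i e)) v = (\<Sum>i\<in>I. c i * phi Ed (f i) v)"
  unfolding phi_def sum_fun_apply
  by (simp add: sum_distrib_left) (rule sum.swap)

lemma phi_zero[simp]: "phi Ed 0 v = 0" by (simp add: phi_def)

lemma Wsp_subspace: "bv.subspace (Wsp Ed)"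
  by (auto simp: bv.subspace_def Wsp_def)

lemma code_subspace: "bv.subspace (incidence_code V E)"
  unfolding code_eq using Wsp_subspace[of "graph_edges V E"]
  unfolding bv.subspace_def by (auto simp: phi_add) (simp add: phi_def sum_distrib_left[symmetric])

lemma dim_Wsp: assumes "finite Ed" shows "bv.dim (Wsp Ed) = card Ed"
proof -
  define d where "d e = (\<lambda>f. if f = e then 1 else 0 :: bit)" for e :: "'a set"
  have inj: "inj d"
  proof (rule injI)
    fix a b assume "d a = d b"
    then have "d a a = d b a" by simp
    then show "a = b" by (cases "a = b") (simp_all add: d_def)
  qed
  have "card (d ` Ed) = bv.dim (Wsp Ed)"
  proof (rule bv.basis_card_eq_dim)
    show "d ` Ed \<subseteq> Wsp Ed" by (auto simp: d_def Wsp_def)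
    show "Wsp Ed \<subseteq> bv.span (d ` Ed)"
    proof
      fix x assume x: "x \<in> Wsp Ed"
      have "x = (\<Sum>e\<in>Ed. (\<lambda>f. x e * d e f))"
      proof
        fix f show "x f = (\<Sum>e\<in>Ed. (\<lambda>f. x e * d e f)) f"
          using x assms by (auto simp: sum_fun_apply d_def Wsp_def if_distrib cong: if_cong)
      qed
      also have "\<dots> \<in> bv.span (d ` Ed)"
        by (intro bv.span_sum bv.span_scale bv.span_base) auto
      finally show "x \<in> bv.span (d ` Ed)" .
    qed
    show "bv.independent (d ` Ed)"
    proof
      assume "bv.dependent (d ` Ed)"
      then obtain u where u: "\<exists>v\<in>d ` Ed. u v \<noteq> 0" "(\<Sum>v\<in>d ` Ed. (\<lambda>e. u v * v e)) = 0"
        using iffD1[OF bv.dependent_finite[of "d ` Ed"]] assms by (meson finite_imageI)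
      from u(1) obtain f where f: "f \<in> Ed" "u (d f) \<noteq> 0" by blast
      have "0 = (\<Sum>v\<in>d ` Ed. (\<lambda>e. u v * v e)) f" using u(2) by simp
      also have "\<dots> = (\<Sum>e\<in>Ed. u (d e) * d e f)"
        by (simp add: sum_fun_apply sum.reindex[OF inj_on_subset[OF inj subset_UNIV]])
      also have "\<dots> = u (d f)" using f(1) assms by (simp add: d_def if_distrib cong: if_cong)
      finally show False using f(2) by simp
    qed
  qed
  then show ?thesis using card_image[OF inj_on_subset[OF inj subset_UNIV]] by simp
qed


lemma Wsp_span: assumes "finite Ed" shows "\<exists>F. finite F \<and> Wsp Ed \<subseteq> bv.span F"
proof -
  define d where "d e = (\<lambda>f. if f = e then 1 else 0 :: bit)" for e :: "'a set"
  have "Wsp Ed \<subseteq> bv.span (d ` Ed)"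
  proof
    fix x assume x: "x \<in> Wsp Ed"
    have "x = (\<Sum>e\<in>Ed. (\<lambda>f. x e * d e f))"
    proof
      fix f show "x f = (\<Sum>e\<in>Ed. (\<lambda>f. x e * d e f)) f"
        using x assms by (auto simp: sum_fun_apply d_def Wsp_def if_distrib cong: if_cong)
    qed
    also have "\<dots> \<in> bv.span (d ` Ed)"
      by (intro bv.span_sum bv.span_scale bv.span_base) auto
    finally show "x \<in> bv.span (d ` Ed)" .
  qed
  then show ?thesis using assms by blast
qed

lemma bit_telescope: "(x::bit) + y + (y + z) = x + z"
  using bit_cases[of x] bit_cases[of y] bit_cases[of z] by auto

lemma walk:
  assumes sg: "simple_graph V E" and R: "(\<lambda>x y. x\<in>V \<and> y\<in>V \<and> E x y)\<^sup>*\<^sup>* a b"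
  shows "\<exists>p\<in>Wsp (graph_edges V E). \<forall>w. phi (graph_edges V E) p w = dl a w + dl b w"
  using R
proof (induction rule: rtranclp_induct)
  case base
  show ?case by (intro bexI[of _ 0]) (auto simp: Wsp_def phi_def)
next
  case (step b c)
  from step.IH obtain p where p: "p \<in> Wsp (graph_edges V E)"
    "\<forall>w. phi (graph_edges V E) p w = dl a w + dl b w" by blast
  define e where "e = {b, c}"
  have e: "e \<in> graph_edges V E" using step.hyps(2) unfolding e_def graph_edges_def by blast
  have bc: "b \<noteq> c" using step.hyps(2) sg unfolding simple_graph_def by blast
  have fin: "finite (graph_edges V E)" using sg finite_edges simple_graph_def by blast
  define q where "q = p + (\<lambda>f. if f = e then 1 else 0)"
  have "q \<in> Wsp (graph_edges V E)" using p(1) e by (auto simp: q_def Wsp_def)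
  moreover have "phi (graph_edges V E) q w = dl a w + dl c w" for w
  proof -
    have "phi (graph_edges V E) (\<lambda>f. if f = e then 1 else 0) w = (if w \<in> e then 1 else 0)"
      unfolding phi_def using fin e by (simp add: sum.delta')
    also have "\<dots> = dl b w + dl c w" using bc by (auto simp: e_def dl_def)
    finally show ?thesis unfolding q_def phi_add using p(2) bit_telescope by simp
  qed
  ultimately show ?case by blast
qed

lemma deg_eq: assumes sg: "simple_graph V E" and v: "v \<in> V"
  shows "card {e\<in>graph_edges V E. v\<in>e} = card {w\<in>V. E v w}"
proof -
  have "{e\<in>graph_edges V E. v\<in>e} = (\<lambda>w. {v,w}) ` {w\<in>V. E v w}"
  proof
    show "(\<lambda>w. {v,w}) ` {w\<in>V. E v w} \<subseteq> {e\<in>graph_edges V E. v\<in>e}"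
      using v by (auto simp: graph_edges_def)
    show "{e\<in>graph_edges V E. v\<in>e} \<subseteq> (\<lambda>w. {v,w}) ` {w\<in>V. E v w}"
    proof
      fix e assume "e \<in> {e\<in>graph_edges V E. v\<in>e}"
      then obtain a b where ab: "e = {a,b}" "a \<in> V" "b \<in> V" "E a b" "v \<in> e"
        unfolding graph_edges_def by blast
      show "e \<in> (\<lambda>w. {v,w}) ` {w\<in>V. E v w}"
      proof (cases "v = a")
        case True then show ?thesis using ab by blast
      next
        case False
        then have "v = b" using ab by blast
        moreover have "E b a" using sg ab unfolding simple_graph_def by blast
        ultimately show ?thesis using ab by blast
      qed
    qed
  qed
  moreover have "inj_on (\<lambda>w. {v,w}) {w\<in>V. E v w}"
    by (rule inj_onI) (metis doubleton_eq_iff)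
  ultimately show ?thesis by (simp add: card_image)
qed

lemma handshake: assumes sg: "simple_graph V E" and reg: "regular V E d"
  shows "card V * d = 2 * card (graph_edges V E)"
proof -
  have finV: "finite V" using sg simple_graph_def by blast
  have fin: "finite (graph_edges V E)" using finV finite_edges by blast
  have "card V * d = (\<Sum>v\<in>V. card {w\<in>V. E v w})" using reg unfolding regular_def by simp
  also have "\<dots> = (\<Sum>v\<in>V. card {e\<in>graph_edges V E. v\<in>e})" using deg_eq[OF sg] by simp
  also have "\<dots> = (\<Sum>v\<in>V. \<Sum>e\<in>{e\<in>graph_edges V E. v\<in>e}. (1::nat))" by simp
  also have "\<dots> = (\<Sum>e\<in>graph_edges V E. \<Sum>v\<in>{v\<in>V. v\<in>e}. (1::nat))"
    by (rule sum.swap_restrict[OF finV fin])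
  also have "\<dots> = (\<Sum>e\<in>graph_edges V E. 2)"
  proof (rule sum.cong[OF refl])
    fix e assume "e \<in> graph_edges V E"
    then have "{v\<in>V. v\<in>e} = e" "card e = 2" using edge_card[OF sg] by auto
    then show "(\<Sum>v\<in>{v\<in>V. v\<in>e}. (1::nat)) = 2" by simp
  qed
  finally show ?thesis by simp
qed

lemma parity: assumes sg: "simple_graph V E"
  shows "(\<Sum>v\<in>V. phi (graph_edges V E) x v) = 0"
proof -
  have finV: "finite V" using sg simple_graph_def by blast
  have fin: "finite (graph_edges V E)" using finV finite_edges by blast
  have "(\<Sum>v\<in>V. phi (graph_edges V E) x v) = (\<Sum>e\<in>graph_edges V E. \<Sum>v\<in>{v\<in>V. v\<in>e}. x e)"
    unfolding phi_def by (rule sum.swap_restrict[OF finV fin])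
  also have "\<dots> = (\<Sum>e\<in>graph_edges V E. 0)"
  proof (rule sum.cong[OF refl])
    fix e assume "e \<in> graph_edges V E"
    then have "{v\<in>V. v\<in>e} = e" "card e = 2" using edge_card[OF sg] by auto
    then show "(\<Sum>v\<in>{v\<in>V. v\<in>e}. x e) = 0" by simp
  qed
  finally show ?thesis by simp
qed

lemma hsum: assumes "finite V" "v0 \<in> V" "w \<in> V"
  shows "(\<Sum>v\<in>V-{v0}. c v * (dl v0 w + dl v w)) = (if w = v0 then (\<Sum>v\<in>V-{v0}. c v) else c w)"
proof (cases "w = v0")
  case True
  have "(\<Sum>v\<in>V-{v0}. c v * (dl v0 v0 + dl v v0)) = (\<Sum>v\<in>V-{v0}. c v)"
    by (rule sum.cong) (auto simp: dl_def)
  then show ?thesis using True by simp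
next
  case False
  have "(\<Sum>v\<in>V-{v0}. c v * (dl v0 w + dl v w)) = (\<Sum>v\<in>V-{v0}. if v = w then c v else 0)"
    using False by (intro sum.cong) (auto simp: dl_def)
  also have "\<dots> = c w" using assms False by (simp add: sum.delta')
  finally show ?thesis using False by simp
qed

lemma code_dim:
  assumes sg: "simple_graph V E" and conn: "connected_graph V E" and ne: "V \<noteq> {}"
  shows "bv.dim (incidence_code V E) + (card V - 1) = card (graph_edges V E)"
proof -
  let ?Ed = "graph_edges V E"
  let ?C = "incidence_code V E"
  have finV: "finite V" using sg simple_graph_def by blast
  have fin: "finite ?Ed" using finV finite_edges by blast
  obtain v0 where v0: "v0 \<in> V" using ne by blast
  have "\<forall>v\<in>V. \<exists>q. q \<in> Wsp ?Ed \<and> (\<forall>w. phi ?Ed q w = dl v0 w + dl v w)"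
    using walk[OF sg] conn v0 unfolding connected_graph_def by blast
  then obtain p where p: "\<And>v. v \<in> V \<Longrightarrow> p v \<in> Wsp ?Ed"
      "\<And>v w. v \<in> V \<Longrightarrow> phi ?Ed (p v) w = dl v0 w + dl v w"
    by metis
  let ?I = "V - {v0}"
  define P where "P = p ` ?I"
  have finI: "finite ?I" using finV by blast
  have inj: "inj_on p ?I"
  proof (rule inj_onI)
    fix a b assume ab: "a \<in> ?I" "b \<in> ?I" "p a = p b"
    have "phi ?Ed (p a) a = 1" using p(2)[of a a] ab by (auto simp: dl_def)
    moreover have "phi ?Ed (p b) a = dl b a" using p(2)[of b a] ab by (auto simp: dl_def)
    ultimately show "a = b" using ab by (auto simp: dl_def split: if_splits)
  qed
  have cardP: "card P = card V - 1" unfolding P_def using card_image[OF inj] finV v0 by simp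
  have finP: "finite P" unfolding P_def using finI by blast
  have PW: "P \<subseteq> Wsp ?Ed" unfolding P_def using p(1) by blast
  have comb: "phi ?Ed (\<Sum>v\<in>?I. (\<lambda>e. c v * p v e)) w = c w" if "w \<in> ?I" for c w
  proof -
    have "phi ?Ed (\<Sum>v\<in>?I. (\<lambda>e. c v * p v e)) w = (\<Sum>v\<in>?I. c v * phi ?Ed (p v) w)"
      by (rule phi_lin[OF finI])
    also have "\<dots> = (\<Sum>v\<in>?I. c v * (dl v0 w + dl v w))" using p(2) by simp
    also have "\<dots> = c w" using hsum[OF finV v0, of w c] that by simp
    finally show ?thesis .
  qed
  have reidx: "(\<Sum>x\<in>P. (\<lambda>e. u x * x e)) = (\<Sum>v\<in>?I. (\<lambda>e. u (p v) * p v e))" for u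
    unfolding P_def by (rule sum.reindex[OF inj, unfolded comp_def])
  have indP: "bv.independent P"
  proof
    assume "bv.dependent P"
    then obtain u where u: "\<exists>v\<in>P. u v \<noteq> 0" "(\<Sum>v\<in>P. (\<lambda>e. u v * v e)) = 0"
      using iffD1[OF bv.dependent_finite[OF finP]] by blast
    from u(1) obtain w where w: "w \<in> ?I" "u (p w) \<noteq> 0" unfolding P_def by blast
    have "u (p w) = phi ?Ed (\<Sum>v\<in>?I. (\<lambda>e. u (p v) * p v e)) w" using comb[OF w(1)] by simp
    also have "\<dots> = 0" using u(2) reidx by simp
    finally show False using w(2) by simp
  qed
  have CP: "y = 0" if y: "y \<in> ?C" "y \<in> bv.span P" for y
  proof -
    obtain u where yu: "y = (\<Sum>x\<in>P. (\<lambda>e. u x * x e))"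
      using y(2) bv.span_finite[OF finP] by auto
    have "u (p w) = 0" if "w \<in> ?I" for w
    proof -
      have "u (p w) = phi ?Ed y w" using comb[OF that] yu reidx by simp
      also have "\<dots> = 0" using y(1) that unfolding code_eq by blast
      finally show ?thesis .
    qed
    then show "y = 0" using yu reidx by (simp add: fun_eq_iff sum_fun_apply)
  qed
  have dec: "\<exists>c\<in>?C. \<exists>y\<in>bv.span P. x = c + y" if x: "x \<in> Wsp ?Ed" for x
  proof -
    define y where "y = (\<Sum>v\<in>?I. (\<lambda>e. phi ?Ed x v * p v e))"
    have yP: "y \<in> bv.span P" unfolding y_def P_def
      by (intro bv.span_sum bv.span_scale bv.span_base) auto
    have yW: "y \<in> Wsp ?Ed" using p(1) by (auto simp: y_def Wsp_def sum_fun_apply)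
    have "x + y \<in> ?C" unfolding code_eq
    proof (intro CollectI conjI ballI)
      show "x + y \<in> Wsp ?Ed" using x yW by (auto simp: Wsp_def)
      fix w assume w: "w \<in> V"
      have py: "phi ?Ed y w = (\<Sum>v\<in>?I. phi ?Ed x v * (dl v0 w + dl v w))"
        unfolding y_def by (simp add: phi_lin[OF finI] p(2))
      show "phi ?Ed (x + y) w = 0"
      proof (cases "w = v0")
        case True
        have "phi ?Ed (x + y) w = phi ?Ed x v0 + (\<Sum>v\<in>?I. phi ?Ed x v)"
          using True py hsum[OF finV v0 w] by (simp add: phi_add)
        also have "\<dots> = (\<Sum>v\<in>V. phi ?Ed x v)" using sum.remove[OF finV v0, of "phi ?Ed x"] by simp
        also have "\<dots> = 0" by (rule parity[OF sg])
        finally show ?thesis .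
      next
        case False
        have "phi ?Ed (x + y) w = phi ?Ed x w + phi ?Ed x w"
          using False py hsum[OF finV v0 w] by (simp add: phi_add)
        then show ?thesis by simp
      qed
    qed
    moreover have "x = (x + y) + y" by (simp add: fun_eq_iff add.assoc)
    ultimately show ?thesis using yP by blast
  qed
  obtain F where F: "finite F" "Wsp ?Ed \<subseteq> bv.span F" using Wsp_span[OF fin] by blast
  have CW: "?C \<subseteq> Wsp ?Ed" unfolding code_eq by blast
  have "bv.dim ?C + card P = bv.dim (Wsp ?Ed)"
    by (rule dimsplit[OF F code_subspace CW finP indP PW CP dec Wsp_subspace])
  then show ?thesis using dim_Wsp[OF fin] cardP by simp
qed

lemma geom: "(x - 1) * (\<Sum>i=0..s. (x::real) ^ i) = x ^ (s + 1) - 1"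
  by (induction s) (auto simp: algebra_simps)

lemma sum_split0: "(\<Sum>i=0..s. (x::real) ^ i) = 1 + (\<Sum>i=1..s. x ^ i)"
  by (induction s) (auto simp: sum.atLeast0_atMost_Suc)

lemma rate_formula:
  assumes r: "r \<ge> 3" and t: "t \<ge> 2"
  shows "(if even t then real r ^ ((t - 1) div 2 + 1) / (real r ^ ((t - 1) div 2 + 1) + 2 * (\<Sum>i=0..(t - 1) div 2. real r ^ i))
             else real r ^ ((t - 1) div 2 + 1) / (real r ^ ((t - 1) div 2 + 1) + 2 * (\<Sum>i=1..(t - 1) div 2. real r ^ i) + 1))
    = (real (moore_bound r t) * (real r - 1) + 2) / (real (moore_bound r t) * (real r + 1))"
proof -
  define s where "s = (t - 1) div 2"
  define S where "S = (\<Sum>i=0..s. real r ^ i)"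
  define T where "T = (\<Sum>i=1..s. real r ^ i)"
  have g: "(real r - 1) * S = real r ^ (s+1) - 1" unfolding S_def by (rule geom)
  have ST: "S = 1 + T" unfolding S_def T_def by (rule sum_split0)
  have T0: "T \<ge> 0" unfolding T_def by (intro sum_nonneg) auto
  have r1: "real r \<ge> 3" using r by simp
  have rp: "real r ^ (s+1) > 0" using r1 by simp
  show ?thesis
  proof (cases "even t")
    case True
    have "(t - 2) div 2 = s" using True t unfolding s_def by presburger
    then have M: "real (moore_bound r t) = 1 + (real r + 1) * S"
      using True unfolding moore_bound_def S_def by (simp add: of_nat_sum sum_distrib_left algebra_simps)
    have e1: "1 + (real r + 1) * S = real r ^ (s+1) + 2 * S" using g by (simp add: algebra_simps)
    have e2: "(1 + (real r + 1) * S) * (real r - 1) + 2 = (real r + 1) * real r ^ (s+1)"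
    proof -
      have "(1 + (real r + 1) * S) * (real r - 1) + 2 = (real r + 1) * (1 + (real r - 1) * S)"
        by (simp add: algebra_simps)
      then show ?thesis using g by simp
    qed
    have pos: "real r ^ (s+1) + 2 * S > 0" using rp ST T0 by simp
    show ?thesis using True
      unfolding M s_def[symmetric] S_def[symmetric] e2 unfolding e1
      using pos r1 by simp
  next
    case False
    then have M: "real (moore_bound r t) = 2 * S"
      unfolding moore_bound_def S_def s_def by (simp add: of_nat_sum)
    have e2: "2 * S * (real r - 1) + 2 = 2 * real r ^ (s+1)" using g by (simp add: algebra_simps)
    have e1: "2 * S * (real r + 1) = 2 * (real r ^ (s+1) + 2 * T + 1)"
      using g ST by (simp add: algebra_simps)
    have pos: "real r ^ (s+1) + 2 * T + 1 > 0" using rp T0 by simp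
    show ?thesis using False
      unfolding M s_def[symmetric] T_def[symmetric] e2 e1
      using pos r1 by (simp add: field_simps)
  qed
qed

lemma g_inj:
  assumes "a > 0" "b > 0" "(r::real) \<ge> 3"
    and "(a * (r - 1) + 2) / (a * (r + 1)) = (b * (r - 1) + 2) / (b * (r + 1))"
  shows "a = b"
proof -
  have nz1: "a * (r + 1) \<noteq> 0" and nz2: "b * (r + 1) \<noteq> 0" using assms by auto
  have "(a * (r - 1) + 2) * (b * (r + 1)) = (b * (r - 1) + 2) * (a * (r + 1))"
    using iffD1[OF frac_eq_eq[OF nz1 nz2] assms(4)] by simp
  then have "2 * b * (r + 1) = 2 * a * (r + 1)" by (simp add: algebra_simps)
  then show ?thesis using assms(3) by simp
qed

lemma moore_pos: "moore_bound r t > 0"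
proof (cases "even t")
  case True then show ?thesis by (simp add: moore_bound_def)
next
  case False
  have "(\<Sum>i=0..(t - 1) div 2. r ^ i) = r ^ 0 + (\<Sum>i=Suc 0..(t - 1) div 2. r ^ i)"
    by (rule sum.atLeast_Suc_atMost) simp
  then show ?thesis using False by (simp add: moore_bound_def)
qed

theorem mainTheorem8:
  fixes V :: "'a set" and E :: "'a \<Rightarrow> 'a \<Rightarrow> bool" and r t :: nat
  assumes "r \<ge> 3" and "t \<ge> 2"
    and "simple_graph V E" and "connected_graph V E"
    and "regular V E (r + 1)" and "girth_at_least V E (t + 1)"
  shows "(let n = card (graph_edges V E); k = dim2 (incidence_code V E);
              s = (t - 1) div 2 in
          real k / real n =
            (if even t then real r ^ (s + 1) / (real r ^ (s + 1) + 2 * (\<Sum>i=0..s. real r ^ i))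
             else real r ^ (s + 1) / (real r ^ (s + 1) + 2 * (\<Sum>i=1..s. real r ^ i) + 1)))
         \<longleftrightarrow> moore_graph V E r t"
proof -
  define M where "M = moore_bound r t"
  define g where "g x = (x * (real r - 1) + 2) / (x * (real r + 1))" for x :: real
  have r3: "real r \<ge> 3" using assms(1) by simp
  have Mpos: "M > 0" unfolding M_def by (rule moore_pos)
  have gpos: "g x > 0" if "x > 0" for x
    unfolding g_def using that r3 by (intro divide_pos_pos add_pos_nonneg mult_pos_pos) auto
  have rhs: "(if even t then real r ^ ((t - 1) div 2 + 1) / (real r ^ ((t - 1) div 2 + 1) + 2 * (\<Sum>i=0..(t - 1) div 2. real r ^ i))
             else real r ^ ((t - 1) div 2 + 1) / (real r ^ ((t - 1) div 2 + 1) + 2 * (\<Sum>i=1..(t - 1) div 2. real r ^ i) + 1))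
      = g (real M)"
    unfolding g_def M_def by (rule rate_formula[OF assms(1,2)])
  have mg: "moore_graph V E r t \<longleftrightarrow> card V = M"
    using assms(5,6) unfolding moore_graph_def M_def by simp
  have k: "dim2 (incidence_code V E) = bv.dim (incidence_code V E)" by (simp add: dim2_def)
  show ?thesis
  proof (cases "V = {}")
    case True
    then have "graph_edges V E = {}" by (simp add: graph_edges_def)
    then have "\<not> (real (dim2 (incidence_code V E)) / real (card (graph_edges V E)) = g (real M))"
      using gpos[of "real M"] Mpos by simp
    moreover have "\<not> moore_graph V E r t" using mg True Mpos by simp
    ultimately show ?thesis unfolding Let_def rhs by blast
  next
    case False
    define N where "N = card V"
    define n where "n = card (graph_edges V E)"
    define k where "k = dim2 (incidence_code V E)"
    have finV: "finite V" using assms(3) simple_graph_def by blast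
    have N1: "N \<ge> 1" unfolding N_def using False finV by (simp add: Suc_le_eq card_gt_0_iff)
    have kN: "k + (N - 1) = n" unfolding k_def k N_def n_def using code_dim[OF assms(3,4) False] .
    have hs: "N * (r + 1) = 2 * n" unfolding N_def n_def using handshake[OF assms(3,5)] .
    have kr: "real k = real n - real N + 1" using kN N1 by (simp add: of_nat_diff)
    have nr: "real n = real N * (real r + 1) / 2" using arg_cong[OF hs, of real] by (simp add: algebra_simps)
    have Npos: "real N > 0" using N1 by simp
    have lhs: "real k / real n = g (real N)"
    proof -
      have den: "real N * (real r + 1) \<noteq> 0" using Npos r3 by simp
      have "real k / real n = (2 * real k) / (2 * real n)" by simp
      also have "2 * real k = real N * (real r - 1) + 2" unfolding kr nr by (simp add: field_simps)
      also have "2 * real n = real N * (real r + 1)" unfolding nr by simp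
      finally show ?thesis unfolding g_def .
    qed
    have "real k / real n = g (real M) \<longleftrightarrow> N = M"
    proof
      assume "real k / real n = g (real M)"
      then have "g (real N) = g (real M)" using lhs by simp
      then have gg: "g (real N) = g (real M)" .
      have "real N = real M"
      proof (rule g_inj[OF Npos _ r3])
        show "real M > 0" using Mpos by simp
        show "(real N * (real r - 1) + 2) / (real N * (real r + 1)) = (real M * (real r - 1) + 2) / (real M * (real r + 1))"
          using gg unfolding g_def .
      qed
      then show "N = M" by simp
    qed (simp add: lhs)
    then show ?thesis unfolding Let_def rhs mg N_def[symmetric] n_def[symmetric] k_def[symmetric] .
  qed
qed
end
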